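(* Let $W=(w_1,w_2,w_3)$ be a $(3,2)$-uframe such that $\mathop{\rm co}\{\pm w_1,\pm w_2,\pm w_3\}$ is a regular hexagon. Then $W$ is a local maximum of $F(S)=\vol\left(\mathop{\rm co}\{\pm v_1,\pm v_2,\pm v_3\}\right)$ over $S=(v_1,v_2,v_3)\in\Omega(3,2)$.
   Context: An $(n,k)$-uframe is an ordered $n$-tuple $(v_1,\dots,v_n)$ of vectors in $\mathbb{R}^k$ spanning $\mathbb{R}^k$ with $\sum_i v_iv_i^T=I_k$; $\Omega(n,k)$ is the set of all of them, with the topology of $\mathbb{R}^{k\times n}$. $\vol$ is area. *)

theory Defs
  imports "HOL-Analysis.Analysis"
begin

text \<open>An ordered n-tuple of vectors in R^k is an element of real^'k^'n;
  its topology is that of R^(k x n).\<close>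

definition outer :: "real^'k \<Rightarrow> real^'k^'k" where
  "outer v = (\<chi> i j. v$i * v$j)"

definition uframe :: "real^'k^'n \<Rightarrow> bool" where
  "uframe V \<longleftrightarrow> span (range (\<lambda>i. V$i)) = UNIV \<and> (\<Sum>i\<in>UNIV. outer (V$i)) = mat 1"

definition Omega :: "(real^'k^'n) set" where
  "Omega = {V. uframe V}"

definition sym_hull :: "real^'k^'n \<Rightarrow> (real^'k) set" where
  "sym_hull V = convex hull (range (\<lambda>i. V$i) \<union> range (\<lambda>i. - (V$i)))"

definition F_vol :: "real^2^'n \<Rightarrow> real" where
  "F_vol V = measure lborel (sym_hull V)"

definition regular_hexagon :: "(real^2) set \<Rightarrow> bool" where
  "regular_hexagon H \<longleftrightarrow> (\<exists>c r t. r > 0 \<and>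
     H = convex hull ((\<lambda>k::nat. c + r *\<^sub>R vector [cos (t + real k * pi / 3), sin (t + real k * pi / 3)]) ` {0..<6}))"

end

theory Submission
  imports Defs
begin

definition det2 :: "real^2 \<Rightarrow> real^2 \<Rightarrow> real" where
  "det2 u w = u$1 * w$2 - u$2 * w$1"

lemma det2_simps[simp]:
  "det2 u u = 0" "det2 (-a) b = - det2 a b" "det2 a (-b) = - det2 a b"
  "det2 (a + b) c = det2 a c + det2 b c" "det2 (a - b) c = det2 a c - det2 b c"
  "det2 c (a + b) = det2 c a + det2 c b" "det2 c (a - b) = det2 c a - det2 c b"
  "det2 (s *\<^sub>R a) b = s * det2 a b" "det2 a (s *\<^sub>R b) = s * det2 a b"
  "det2 0 a = 0" "det2 a 0 = 0"
  by (auto simp: det2_def algebra_simps)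

lemma det2_swap: "det2 b a = - det2 a b"
  by (simp add: det2_def)

lemma convex_det2_ge: "convex {x. det2 a x \<ge> k}"
  unfolding convex_def
proof (intro ballI allI impI, simp)
  fix x y and u v :: real
  assume "k \<le> det2 a x" "k \<le> det2 a y" "0 \<le> u" "0 \<le> v" "u + v = 1"
  then have "u * k \<le> u * det2 a x" "v * k \<le> v * det2 a y" by (auto intro: mult_left_mono)
  then show "k \<le> u * det2 a x + v * det2 a y" using \<open>u+v=1\<close> by (metis add_mono distrib_right mult_1)
qed

lemma in_tri:
  assumes D: "det2 u w > 0" and "det2 u x \<ge> 0" "det2 w x \<le> 0" "det2 (w - u) (x - u) \<ge> 0"
  shows "x \<in> convex hull {0,u,w}"
proof -
  define s where "s = det2 x w / det2 u w"
  define t where "t = det2 u x / det2 u w"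
  have sD: "s * det2 u w = det2 x w" "t * det2 u w = det2 u x" using D by (auto simp: s_def t_def)
  have st: "det2 (w - u) (x - u) = (1 - s - t) * det2 u w"
    using sD by (simp add: algebra_simps det2_swap[of x w] det2_swap[of u w] det2_swap[of x u])
  have "det2 x w \<ge> 0" using assms(3) det2_swap[of x w] by simp
  then have s0: "s \<ge> 0" using D by (simp add: s_def)
  have t0: "t \<ge> 0" using assms by (simp add: t_def)
  have "(1 - s - t) * det2 u w \<ge> 0" using assms(4) st by linarith
  then have st1: "1 - s - t \<ge> 0" using D by (simp add: zero_le_mult_iff)
  have id: "det2 u w *\<^sub>R x = det2 x w *\<^sub>R u + det2 u x *\<^sub>R w"
    by (simp add: vec_eq_iff forall_2 det2_def algebra_simps)
  have "x = (1 / det2 u w) *\<^sub>R (det2 u w *\<^sub>R x)" using D by simp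
  also have "\<dots> = s *\<^sub>R u + t *\<^sub>R w" unfolding id s_def t_def
    by (simp add: scaleR_add_right)
  finally have x: "x = s *\<^sub>R u + t *\<^sub>R w" .
  have "x = (1 - s - t) *\<^sub>R 0 + s *\<^sub>R u + t *\<^sub>R w" using x by simp
  then show ?thesis unfolding convex_hull_3 using s0 t0 st1
    by (intro CollectI exI[of _ "1 - s - t"] exI[of _ s] exI[of _ t]) auto
qed

lemma tri_param:
  assumes "x \<in> convex hull {0,u,w}"
  obtains s t where "s \<ge> 0" "t \<ge> 0" "x = s *\<^sub>R u + t *\<^sub>R w"
  using assms unfolding convex_hull_3 by auto

lemma tri_sign:
  assumes "x \<in> convex hull {0,u,w}" "det2 z u \<ge> 0" "det2 z w \<ge> 0"
  shows "det2 z x \<ge> 0"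
proof -
  obtain s t where "s \<ge> 0" "t \<ge> 0" "x = s *\<^sub>R u + t *\<^sub>R w" using tri_param assms(1) by blast
  then show ?thesis using assms by simp
qed

lemma tri_sign':
  assumes "x \<in> convex hull {0,u,w}" "det2 z u \<le> 0" "det2 z w \<le> 0"
  shows "det2 z x \<le> 0"
  using tri_sign[OF assms(1), of "-z"] assms by simp

lemma tri_measure: "measure lebesgue (convex hull {0, u, w}) = \<bar>det2 u w\<bar> / 2"
proof -
  have c: "compact (convex hull {0::real^2, u, w})" by (intro finite_imp_compact_convex_hull) auto
  have "measure lebesgue (convex hull {0, u, w}) = measure lborel (convex hull {0::real^2, u, w})"
    using c by (intro measure_completion) (auto dest: compact_imp_closed)
  also have "\<dots> = \<bar>det2 u w\<bar> / 2" unfolding content_triangle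
    by (simp add: det2_def abs_minus_commute mult.commute)
  finally show ?thesis .
qed

lemma tri_lmeas: "convex hull {0, u, w::real^2} \<in> lmeasurable"
  by (intro lmeasurable_compact finite_imp_compact_convex_hull) auto

lemma negl_line:
  assumes "p \<noteq> 0" shows "negligible {x. det2 p x = 0}"
proof -
  define a :: "real^2" where "a = (\<chi> i. if i = 1 then - p$2 else p$1)"
  have "a \<noteq> 0" using assms by (auto simp: a_def vec_eq_iff forall_2)
  moreover have "{x. det2 p x = 0} = {x. a \<bullet> x = 0}"
    by (auto simp: a_def det2_def inner_vec_def sum_2 algebra_simps)
  ultimately show ?thesis using negligible_hyperplane[of a 0] by simp
qed

lemma measure_union_negl:
  assumes "A \<in> lmeasurable" "B \<in> lmeasurable" "A \<inter> B \<subseteq> N" "negligible N"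
  shows "measure lebesgue (A \<union> B) = measure lebesgue A + measure lebesgue B"
proof -
  have "measure lebesgue (A \<inter> B) = 0"
    using assms negligible_subset negligible_imp_measure0 by blast
  then show ?thesis using measure_Un3[OF assms(1,2)] by simp
qed

lemma tri_signs:
  assumes "x \<in> convex hull {0,u,w}"
  shows "det2 z u \<ge> 0 \<Longrightarrow> det2 z w \<ge> 0 \<Longrightarrow> det2 z x \<ge> 0"
    and "det2 z u \<le> 0 \<Longrightarrow> det2 z w \<le> 0 \<Longrightarrow> det2 z x \<le> 0"
  using tri_sign[OF assms] tri_sign'[OF assms] by auto

lemma hex_measure:
  fixes p q r :: "real^2"
  assumes D1: "det2 p q > 0" and D2: "det2 q r > 0" and D3: "det2 p r > 0"
  and T1: "\<bar>det2 q r - det2 p r\<bar> \<le> det2 p q" and T2: "\<bar>det2 p q - det2 p r\<bar> \<le> det2 q r"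
  and T3: "\<bar>det2 p q - det2 q r\<bar> \<le> det2 p r"
  shows "measure lebesgue (convex hull {p,q,r,-p,-q,-r}) = det2 p q + det2 q r + det2 p r"
proof -
  define P where "P = {p,q,r,-p,-q,-r}"
  define H where "H = convex hull P"
  have sw: "det2 q p = - det2 p q" "det2 r q = - det2 q r" "det2 r p = - det2 p r"
    by (simp_all add: det2_def)
  have half: "det2 (w-u) (x-u) \<ge> 0"
    if y: "\<And>y. y \<in> P \<Longrightarrow> det2 (w-u) (y-u) \<ge> 0" and x: "x \<in> H" for u w x
  proof -
    have "P \<subseteq> {y. det2 (w-u) u \<le> det2 (w-u) y}" using y by auto
    then have "H \<subseteq> {y. det2 (w-u) u \<le> det2 (w-u) y}"
      unfolding H_def by (intro hull_minimal convex_det2_ge)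
    then show ?thesis using x by auto
  qed
  define T1 where "T1 = convex hull {0, p, q}"
  define T2 where "T2 = convex hull {0, q, r}"
  define T3 where "T3 = convex hull {0, r, -p}"
  define T4 where "T4 = convex hull {0, -p, -q}"
  define T5 where "T5 = convex hull {0, -q, -r}"
  define T6 where "T6 = convex hull {0, -r, p}"
  have cover: "x \<in> T1 \<union> T2 \<union> T3 \<union> T4 \<union> T5 \<union> T6" if x: "x \<in> H" for x
  proof -
    have E1: "det2 (q-p) (x-p) \<ge> 0"
      by (rule half[OF _ x]) (insert T1 T2 T3, auto simp: P_def sw abs_le_iff)
    have E2: "det2 (r-q) (x-q) \<ge> 0"
      by (rule half[OF _ x]) (insert T1 T2 T3, auto simp: P_def sw abs_le_iff)
    have E3: "det2 (-p-r) (x-r) \<ge> 0"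
      by (rule half[OF _ x]) (insert T1 T2 T3, auto simp: P_def sw abs_le_iff)
    have E4: "det2 (-q-(-p)) (x-(-p)) \<ge> 0"
      by (rule half[OF _ x]) (insert T1 T2 T3, auto simp: P_def sw abs_le_iff)
    have E5: "det2 (-r-(-q)) (x-(-q)) \<ge> 0"
      by (rule half[OF _ x]) (insert T1 T2 T3, auto simp: P_def sw abs_le_iff)
    have E6: "det2 (p-(-r)) (x-(-r)) \<ge> 0"
      by (rule half[OF _ x]) (insert T1 T2 T3, auto simp: P_def sw abs_le_iff)
    show ?thesis
    proof (cases "det2 p x \<ge> 0")
      case a: True
      show ?thesis
      proof (cases "det2 q x \<le> 0")
        case True
        then have "x \<in> T1" unfolding T1_def using a D1 E1 by (intro in_tri) auto
        then show ?thesis by blast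
      next
        case b: False
        show ?thesis
        proof (cases "det2 r x \<le> 0")
          case True
          then have "x \<in> T2" unfolding T2_def using b D2 E2 by (intro in_tri) auto
          then show ?thesis by blast
        next
          case False
          then have "x \<in> T3" unfolding T3_def using a D3 E3 sw by (intro in_tri) auto
          then show ?thesis by blast
        qed
      qed
    next
      case a: False
      show ?thesis
      proof (cases "det2 q x \<ge> 0")
        case True
        then have "x \<in> T4" unfolding T4_def using a D1 E4 by (intro in_tri) auto
        then show ?thesis by blast
      next
        case b: False
        show ?thesis
        proof (cases "det2 r x \<ge> 0")
          case True
          then have "x \<in> T5" unfolding T5_def using b D2 E5 by (intro in_tri) auto
          then show ?thesis by blast
        next
          case False
          then have "x \<in> T6" unfolding T6_def using a D3 E6 sw by (intro in_tri) auto
          then show ?thesis by blast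
        qed
      qed
    qed
  qed
  have cH: "convex H" unfolding H_def by simp
  have zH: "0 \<in> H"
  proof -
    have "p \<in> H" "-p \<in> H" unfolding H_def P_def by (auto intro: hull_inc)
    then have "(1/2) *\<^sub>R p + (1/2) *\<^sub>R (-p) \<in> H" using cH by (intro convexD) auto
    then show ?thesis by simp
  qed
  have sub: "convex hull {0, u, w} \<subseteq> H" if "u \<in> P" "w \<in> P" for u w
  proof -
    have "u \<in> H" "w \<in> H" using that unfolding H_def by (auto intro: hull_inc)
    then show ?thesis using zH cH by (intro hull_minimal) auto
  qed
  have HU: "H = T1 \<union> T2 \<union> T3 \<union> T4 \<union> T5 \<union> T6"
    using cover sub unfolding T1_def T2_def T3_def T4_def T5_def T6_def
    by (auto simp: P_def)
  define N where "N = {x. det2 p x = 0} \<union> {x. det2 q x = 0} \<union> {x. det2 r x = 0}"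
  have "p \<noteq> 0" "q \<noteq> 0" "r \<noteq> 0" using D1 D2 by auto
  then have nN: "negligible N" unfolding N_def by (intro negligible_Un negl_line)
  have S1: "det2 p x \<ge> 0 \<and> det2 q x \<le> 0 \<and> det2 r x \<le> 0" if "x \<in> T1" for x
    using tri_signs[OF that[unfolded T1_def]] D1 D2 D3 sw by (auto intro!: tri_signs)
  have S2: "det2 p x \<ge> 0 \<and> det2 q x \<ge> 0 \<and> det2 r x \<le> 0" if "x \<in> T2" for x
    using tri_signs[OF that[unfolded T2_def]] D1 D2 D3 sw by (auto intro!: tri_signs)
  have S3: "det2 p x \<ge> 0 \<and> det2 q x \<ge> 0 \<and> det2 r x \<ge> 0" if "x \<in> T3" for x
    using tri_signs[OF that[unfolded T3_def]] D1 D2 D3 sw by (auto intro!: tri_signs)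
  have S4: "det2 p x \<le> 0 \<and> det2 q x \<ge> 0 \<and> det2 r x \<ge> 0" if "x \<in> T4" for x
    using tri_signs[OF that[unfolded T4_def]] D1 D2 D3 sw by (auto intro!: tri_signs)
  have S5: "det2 p x \<le> 0 \<and> det2 q x \<le> 0 \<and> det2 r x \<ge> 0" if "x \<in> T5" for x
    using tri_signs[OF that[unfolded T5_def]] D1 D2 D3 sw by (auto intro!: tri_signs)
  have S6: "det2 p x \<le> 0 \<and> det2 q x \<le> 0 \<and> det2 r x \<le> 0" if "x \<in> T6" for x
    using tri_signs[OF that[unfolded T6_def]] D1 D2 D3 sw by (auto intro!: tri_signs)
  have i12: "(T1 \<union> T2 \<union> T3 \<union> T4 \<union> T5) \<inter> T6 \<subseteq> N"
   "(T1 \<union> T2 \<union> T3 \<union> T4) \<inter> T5 \<subseteq> N" "(T1 \<union> T2 \<union> T3) \<inter> T4 \<subseteq> N"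
   "(T1 \<union> T2) \<inter> T3 \<subseteq> N" "T1 \<inter> T2 \<subseteq> N"
    unfolding N_def
    by (auto dest!: S1 S2 S3 S4 S5 S6)
  have m: "T1 \<in> lmeasurable" "T2 \<in> lmeasurable" "T3 \<in> lmeasurable" "T4 \<in> lmeasurable"
     "T5 \<in> lmeasurable" "T6 \<in> lmeasurable"
    unfolding T1_def T2_def T3_def T4_def T5_def T6_def by (simp_all add: tri_lmeas)
  have "measure lebesgue H = measure lebesgue T1 + measure lebesgue T2 + measure lebesgue T3
     + measure lebesgue T4 + measure lebesgue T5 + measure lebesgue T6"
    unfolding HU
    by (subst measure_union_negl[OF _ _ _ nN], (use m i12 in auto)[3])+ (rule refl)
  also have "\<dots> = det2 p q + det2 q r + det2 p r"
    unfolding T1_def T2_def T3_def T4_def T5_def T6_def tri_measure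
    using D1 D2 D3 sw by simp
  finally show ?thesis unfolding H_def P_def .
qed

lemma hex_measure_sym:
  fixes v1 v2 v3 :: "real^2"
  assumes p12: "\<bar>det2 v1 v2\<bar> > 0" and p13: "\<bar>det2 v1 v3\<bar> > 0" and p23: "\<bar>det2 v2 v3\<bar> > 0"
  and t1: "\<bar>det2 v1 v2\<bar> \<le> \<bar>det2 v1 v3\<bar> + \<bar>det2 v2 v3\<bar>"
  and t2: "\<bar>det2 v1 v3\<bar> \<le> \<bar>det2 v1 v2\<bar> + \<bar>det2 v2 v3\<bar>"
  and t3: "\<bar>det2 v2 v3\<bar> \<le> \<bar>det2 v1 v2\<bar> + \<bar>det2 v1 v3\<bar>"
  shows "measure lebesgue (convex hull {v1,v2,v3,-v1,-v2,-v3}) = \<bar>det2 v1 v2\<bar> + \<bar>det2 v1 v3\<bar> + \<bar>det2 v2 v3\<bar>"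
proof -
  define p where "p = v1"
  define r where "r = (if det2 v1 v2 > 0 then v2 else -v2)"
  define q where "q = (if det2 v1 v3 > 0 then v3 else -v3)"
  have dpr: "det2 p r = \<bar>det2 v1 v2\<bar>" using p12 by (auto simp: p_def r_def)
  have dpq: "det2 p q = \<bar>det2 v1 v3\<bar>" using p13 by (auto simp: p_def q_def)
  have dqr: "\<bar>det2 q r\<bar> = \<bar>det2 v2 v3\<bar>" by (auto simp: q_def r_def det2_swap[of v3 v2])
  have sw: "det2 r q = - det2 q r" by (simp add: det2_def)
  have c1: "\<bar>\<bar>det2 v2 v3\<bar> - \<bar>det2 v1 v2\<bar>\<bar> \<le> \<bar>det2 v1 v3\<bar>"
    "\<bar>\<bar>det2 v1 v3\<bar> - \<bar>det2 v1 v2\<bar>\<bar> \<le> \<bar>det2 v2 v3\<bar>"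
    "\<bar>\<bar>det2 v1 v3\<bar> - \<bar>det2 v2 v3\<bar>\<bar> \<le> \<bar>det2 v1 v2\<bar>"
    "\<bar>\<bar>det2 v2 v3\<bar> - \<bar>det2 v1 v3\<bar>\<bar> \<le> \<bar>det2 v1 v2\<bar>"
    "\<bar>\<bar>det2 v1 v2\<bar> - \<bar>det2 v1 v3\<bar>\<bar> \<le> \<bar>det2 v2 v3\<bar>"
    "\<bar>\<bar>det2 v1 v2\<bar> - \<bar>det2 v2 v3\<bar>\<bar> \<le> \<bar>det2 v1 v3\<bar>"
    unfolding abs_le_iff[of "_ - _"] using t1 t2 t3 by linarith+
  show ?thesis
  proof (cases "det2 q r > 0")
    case True
    then have dqr': "det2 q r = \<bar>det2 v2 v3\<bar>" using dqr by simp
    have S: "{p,q,r,-p,-q,-r} = {v1,v2,v3,-v1,-v2,-v3}" by (auto simp: p_def q_def r_def)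
    have "measure lebesgue (convex hull {p,q,r,-p,-q,-r}) = det2 p q + det2 q r + det2 p r"
      by (rule hex_measure) (simp_all only: dpr dpq dqr' c1 p12 p13 p23)
    then show ?thesis using dpr dpq dqr' unfolding S by simp
  next
    case False
    then have F: "det2 r q = \<bar>det2 v2 v3\<bar>" using sw dqr p23 by auto
    have S: "{p,r,q,-p,-r,-q} = {v1,v2,v3,-v1,-v2,-v3}" by (auto simp: p_def q_def r_def)
    have "measure lebesgue (convex hull {p,r,q,-p,-r,-q}) = det2 p r + det2 r q + det2 p q"
      by (rule hex_measure) (simp_all only: F dpr dpq c1 p12 p13 p23)
    then show ?thesis using F dpr dpq unfolding S by simp
  qed
qed

lemma sym_hull_3: "sym_hull (V::real^'k^3) = convex hull {V$1,V$2,V$3,-V$1,-V$2,-V$3}"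
  unfolding sym_hull_def by (rule arg_cong[where f="\<lambda>S. convex hull S"]) (auto simp: UNIV_3)

lemma F_vol_3: "F_vol (V::real^2^3) = measure lebesgue (convex hull {V$1,V$2,V$3,-V$1,-V$2,-V$3})"
proof -
  have "compact (convex hull {V$1,V$2,V$3,-V$1,-V$2,-V$3})"
    by (intro finite_imp_compact_convex_hull) auto
  then show ?thesis unfolding F_vol_def sym_hull_3
    by (intro measure_completion[symmetric]) (auto dest: compact_imp_closed)
qed

lemma frame_eqs:
  fixes S :: "real^2^3"
  assumes "S \<in> Omega"
  shows "(S$1$1)^2 + (S$2$1)^2 + (S$3$1)^2 = 1" "(S$1$2)^2 + (S$2$2)^2 + (S$3$2)^2 = 1"
    "S$1$1 * S$1$2 + S$2$1 * S$2$2 + S$3$1 * S$3$2 = 0"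
proof -
  have e: "(\<Sum>i\<in>UNIV. outer (S$i)) = mat 1" using assms by (simp add: Omega_def uframe_def)
  have "(\<Sum>i\<in>UNIV. outer (S$i)) $ 1 $ 1 = (mat 1 :: real^2^2) $ 1 $ 1"
       "(\<Sum>i\<in>UNIV. outer (S$i)) $ 2 $ 2 = (mat 1 :: real^2^2) $ 2 $ 2"
       "(\<Sum>i\<in>UNIV. outer (S$i)) $ 1 $ 2 = (mat 1 :: real^2^2) $ 1 $ 2" by (simp_all only: e)
  then show "(S$1$1)^2 + (S$2$1)^2 + (S$3$1)^2 = 1" "(S$1$2)^2 + (S$2$2)^2 + (S$3$2)^2 = 1"
    "S$1$1 * S$1$2 + S$2$1 * S$2$2 + S$3$1 * S$3$2 = 0"
    by (simp_all add: sum_3 outer_def mat_def power2_eq_square)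
qed

lemma lagrange:
  fixes S :: "real^2^3"
  assumes "S \<in> Omega"
  shows "(det2 (S$1) (S$2))^2 + (det2 (S$1) (S$3))^2 + (det2 (S$2) (S$3))^2 = 1"
proof -
  note f = frame_eqs[OF assms]
  have "(det2 (S$1) (S$2))^2 + (det2 (S$1) (S$3))^2 + (det2 (S$2) (S$3))^2
     = ((S$1$1)^2 + (S$2$1)^2 + (S$3$1)^2) * ((S$1$2)^2 + (S$2$2)^2 + (S$3$2)^2)
       - (S$1$1 * S$1$2 + S$2$1 * S$2$2 + S$3$1 * S$3$2)^2"
    unfolding det2_def by (simp add: power2_eq_square algebra_simps)
  then show ?thesis using f by simp
qed

lemma sum_le_sqrt3:
  fixes a b c :: real
  assumes "a^2 + b^2 + c^2 = 1"
  shows "\<bar>a\<bar> + \<bar>b\<bar> + \<bar>c\<bar> \<le> sqrt 3"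
proof (rule real_le_rsqrt)
  have "(\<bar>a\<bar> + \<bar>b\<bar> + \<bar>c\<bar>)^2 + ((\<bar>a\<bar> - \<bar>b\<bar>)^2 + (\<bar>a\<bar> - \<bar>c\<bar>)^2 + (\<bar>b\<bar> - \<bar>c\<bar>)^2) = 3 * (a^2 + b^2 + c^2)"
    by (simp add: power2_eq_square algebra_simps)
  also have "\<dots> = 3" using assms by simp
  finally have e: "(\<bar>a\<bar> + \<bar>b\<bar> + \<bar>c\<bar>)^2 + ((\<bar>a\<bar> - \<bar>b\<bar>)^2 + (\<bar>a\<bar> - \<bar>c\<bar>)^2 + (\<bar>b\<bar> - \<bar>c\<bar>)^2) = 3" .
  have "(\<bar>a\<bar> - \<bar>b\<bar>)^2 + (\<bar>a\<bar> - \<bar>c\<bar>)^2 + (\<bar>b\<bar> - \<bar>c\<bar>)^2 \<ge> 0" by simp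
  then show "(\<bar>a\<bar> + \<bar>b\<bar> + \<bar>c\<bar>)^2 \<le> 3" using e by linarith
qed

lemma entry_le1:
  fixes S :: "real^2^3"
  assumes "S \<in> Omega"
  shows "\<bar>S$i$k\<bar> \<le> 1"
proof -
  note f = frame_eqs[OF assms]
  have "(S$i$k)^2 \<le> 1"
    using f exhaust_3[of i] exhaust_2[of k]
    by (auto simp: add_nonneg_nonneg) (smt (verit) zero_le_power2)+
  then show ?thesis by (simp add: abs_square_le_1)
qed

lemma prod_close:
  fixes a b a' b' e :: real
  assumes "\<bar>a\<bar> \<le> 1" "\<bar>b'\<bar> \<le> 1" "\<bar>a - a'\<bar> \<le> e" "\<bar>b - b'\<bar> \<le> e"
  shows "\<bar>a * b - a' * b'\<bar> \<le> 2 * e"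
proof -
  have "a * b - a' * b' = a * (b - b') + (a - a') * b'" by (simp add: algebra_simps)
  moreover have "\<bar>a * (b - b')\<bar> \<le> 1 * e" unfolding abs_mult using assms by (intro mult_mono) auto
  moreover have "\<bar>(a - a') * b'\<bar> \<le> e * 1" unfolding abs_mult using assms by (intro mult_mono) auto
  ultimately show ?thesis by linarith
qed

lemma det2_close:
  fixes x y x' y' :: "real^2"
  assumes "\<And>k. \<bar>x$k\<bar> \<le> 1" "\<And>k. \<bar>y'$k\<bar> \<le> 1" "\<And>k. \<bar>x$k - x'$k\<bar> \<le> e" "\<And>k. \<bar>y$k - y'$k\<bar> \<le> e"
  shows "\<bar>det2 x y - det2 x' y'\<bar> \<le> 4 * e"
proof -
  have "\<bar>x$1 * y$2 - x'$1 * y'$2\<bar> \<le> 2 * e" "\<bar>x$2 * y$1 - x'$2 * y'$1\<bar> \<le> 2 * e"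
    by (rule prod_close; fact assms)+
  then show ?thesis unfolding det2_def by linarith
qed

lemma norm2: "norm (x::real^2)^2 = x$1^2 + x$2^2"
  unfolding power2_norm_eq_inner by (simp add: inner_vec_def sum_2 power2_eq_square)

lemma sphere_in:
  fixes X :: "(real^2) set"
  assumes Xc: "X \<subseteq> cball c r" and y: "norm (y - c) = r" and yh: "y \<in> convex hull X"
  shows "y \<in> X"
proof (rule ccontr)
  assume yX: "y \<notin> X"
  have "X \<subseteq> {x. (y - c) \<bullet> x < r^2 + (y - c) \<bullet> c}"
  proof
    fix x assume x: "x \<in> X"
    then have "x \<noteq> y" using yX by auto
    then have "0 < norm (x - y)^2" by simp
    also have "norm (x - y)^2 = norm (x - c)^2 - 2 * ((y - c) \<bullet> (x - c)) + norm (y - c)^2"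
      by (simp add: power2_norm_eq_inner inner_diff_left inner_diff_right inner_commute algebra_simps)
    finally have 1: "2 * ((y - c) \<bullet> (x - c)) < norm (x - c)^2 + r^2" using y by simp
    have "norm (x - c) \<le> r" using Xc x by (auto simp: dist_norm norm_minus_commute)
    then have "norm (x - c)^2 \<le> r^2" by (simp add: power_mono)
    with 1 have "(y - c) \<bullet> (x - c) < r^2" by linarith
    then show "x \<in> {x. (y - c) \<bullet> x < r^2 + (y - c) \<bullet> c}" by (simp add: inner_diff_right)
  qed
  then have "convex hull X \<subseteq> {x. (y - c) \<bullet> x < r^2 + (y - c) \<bullet> c}"
    by (intro hull_minimal convex_halfspace_lt)
  with yh have "(y - c) \<bullet> (y - c) < r^2" by (auto simp: inner_diff_right)
  then show False using y by (metis power2_norm_eq_inner less_irrefl)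
qed

lemma sin_120: "sin (2 * pi / 3) = sqrt 3 / 2"
proof -
  have "sin (2 * pi / 3) = sin (2 * (pi / 3))" by simp
  also have "\<dots> = 2 * sin (pi/3) * cos (pi/3)" by (rule sin_double)
  finally show ?thesis by (simp add: sin_60 cos_60)
qed

theorem lemma12:
  fixes W :: "real^2^3"
  assumes "W \<in> Omega"
    and "regular_hexagon (sym_hull W)"
  shows "\<exists>e>0. \<forall>S\<in>Omega. dist S W < e \<longrightarrow> F_vol S \<le> F_vol W"
proof -
  note WO = assms(1)
  define X where "X = {W$1,W$2,W$3,-W$1,-W$2,-W$3}"
  have XN: "-z \<in> X" if "z \<in> X" for z using that by (auto simp: X_def)
  obtain c r t where r: "r > 0" and HX: "convex hull X = convex hull ((\<lambda>k::nat. c + r *\<^sub>R vector [cos (t + real k * pi / 3), sin (t + real k * pi / 3)]) ` {0..<6})"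
    using assms(2) unfolding regular_hexagon_def sym_hull_3 X_def by blast
  define u where "u k = (vector [cos (t + real k * pi / 3), sin (t + real k * pi / 3)] :: real^2)" for k :: nat
  define Q where "Q k = c + r *\<^sub>R u k" for k
  have HX': "convex hull X = convex hull (Q ` {0..<6})" using HX by (simp add: Q_def u_def)
  have nu2: "norm (u k)^2 = 1" for k by (simp add: norm2 u_def)
  have nu: "norm (u k) = 1" for k
    using nu2[of k] power2_eq_1_iff[of "norm (u k)"] norm_ge_zero[of "u k"] by auto
  have Qc: "Q k \<in> cball c r" for k using r by (simp add: Q_def dist_norm nu)
  have Xc: "X \<subseteq> cball c r"
  proof -
    have "convex hull (Q ` {0..<6}) \<subseteq> cball c r" using Qc by (intro hull_minimal) auto
    then show ?thesis using hull_subset[of X convex] HX' by auto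
  qed
  have QX: "Q k \<in> X" if "k < 6" for k
  proof (rule sphere_in[OF Xc])
    show "norm (Q k - c) = r" using r by (simp add: Q_def nu)
    show "Q k \<in> convex hull X" unfolding HX' using that by (intro hull_inc) auto
  qed
  have c0: "c = 0"
  proof -
    have "Q 0 \<in> X" "Q 3 \<in> X" using QX by auto
    then have "-Q 0 \<in> X" "-Q 3 \<in> X" using XN by auto
    then have a: "-Q 0 \<in> cball c r" "-Q 3 \<in> cball c r" using Xc by (meson subsetD)+
    have u3: "u 3 = - u 0" by (simp add: u_def vec_eq_iff forall_2)
    have n1: "norm (c + Q 0) \<le> r" "norm (c + Q 3) \<le> r" using a by (auto simp: dist_norm)
    have "norm (c + Q 0)^2 \<le> r^2" "norm (c + Q 3)^2 \<le> r^2"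
      using n1 by (auto intro: power_mono)
    then have s1: "(2 * c$1 + r * u 0 $ 1)^2 + (2 * c$2 + r * u 0 $ 2)^2 \<le> r^2"
      and s2: "(2 * c$1 - r * u 0 $ 1)^2 + (2 * c$2 - r * u 0 $ 2)^2 \<le> r^2"
      by (simp_all add: norm2 Q_def u3)
    have uu: "(u 0 $ 1)^2 + (u 0 $ 2)^2 = 1" using nu2[of 0] by (simp add: norm2)
    have "(2 * c$1 + r * u 0 $ 1)^2 + (2 * c$2 + r * u 0 $ 2)^2 + ((2 * c$1 - r * u 0 $ 1)^2 + (2 * c$2 - r * u 0 $ 2)^2)
       = 8 * ((c$1)^2 + (c$2)^2) + 2 * r^2 * ((u 0 $ 1)^2 + (u 0 $ 2)^2)"
      by (simp add: power2_eq_square algebra_simps)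
    with s1 s2 uu have "(c$1)^2 + (c$2)^2 \<le> 0" by simp
    then have "c$1 = 0" "c$2 = 0" by (simp_all add: sum_power2_le_zero_iff)
    then show ?thesis by (simp add: vec_eq_iff forall_2)
  qed
  have dQ: "det2 (Q a) (Q b) = r^2 * sin ((t + real b * pi / 3) - (t + real a * pi / 3))" for a b
  proof -
    have "det2 (Q a) (Q b) = r^2 * (sin (t + real b * pi / 3) * cos (t + real a * pi / 3)
        - cos (t + real b * pi / 3) * sin (t + real a * pi / 3))"
      by (simp add: Q_def c0 u_def det2_def power2_eq_square algebra_simps)
    then show ?thesis by (simp only: sin_diff)
  qed
  define K where "K = r^2 * (sqrt 3 / 2)"
  have K0: "K > 0" using r by (simp add: K_def)
  have d01: "det2 (Q 0) (Q 1) = K"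
  proof -
    have e: "(t + real 1 * pi / 3) - (t + real 0 * pi / 3) = pi / 3" by simp
    show ?thesis using dQ[of 0 1] unfolding e by (simp add: K_def sin_60)
  qed
  have d12: "det2 (Q 1) (Q 2) = K"
  proof -
    have e: "(t + real 2 * pi / 3) - (t + real 1 * pi / 3) = pi / 3" by simp
    show ?thesis using dQ[of 1 2] unfolding e by (simp add: K_def sin_60)
  qed
  have d02: "det2 (Q 0) (Q 2) = K"
  proof -
    have e: "(t + real 2 * pi / 3) - (t + real 0 * pi / 3) = 2 * pi / 3" by simp
    show ?thesis using dQ[of 0 2] unfolding e by (simp add: K_def sin_120)
  qed
  have nQ: "(Q a $ 1)^2 + (Q a $ 2)^2 = r^2" for a
  proof -
    have "norm (Q a) = r" using r by (simp add: Q_def c0 nu)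
    then show ?thesis by (metis norm2)
  qed
  have ex: "\<exists>i s. (s = 1 \<or> s = -1) \<and> W$i = s *\<^sub>R Q a" if "a < 6" for a
  proof -
    have "\<exists>i. Q a = W$i \<or> Q a = - W$i" using QX[OF that] unfolding X_def by blast
    then obtain i where "Q a = W$i \<or> Q a = - W$i" by blast
    then show ?thesis by (metis scaleR_minus1_left scaleR_one minus_minus)
  qed
  obtain i0 s0 where is0: "s0 = 1 \<or> s0 = -1" "W$i0 = s0 *\<^sub>R Q 0" using ex[of 0] by auto
  obtain i1 s1 where is1: "s1 = 1 \<or> s1 = -1" "W$i1 = s1 *\<^sub>R Q 1" using ex[of 1] by auto
  obtain i2 s2 where is2: "s2 = 1 \<or> s2 = -1" "W$i2 = s2 *\<^sub>R Q 2" using ex[of 2] by auto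
  have sw: "det2 (Q 1) (Q 0) = - K" "det2 (Q 2) (Q 1) = - K" "det2 (Q 2) (Q 0) = - K"
    using d01 d12 d02 det2_swap[of "Q 1" "Q 0"] det2_swap[of "Q 2" "Q 1"] det2_swap[of "Q 2" "Q 0"]
    by simp_all
  have "i0 \<noteq> i1"
  proof
    assume "i0 = i1"
    then have "det2 (W$i0) (W$i1) = 0" by simp
    then show False using is0 is1 d01 K0 by auto
  qed
  moreover have "i1 \<noteq> i2"
  proof
    assume "i1 = i2"
    then have "det2 (W$i1) (W$i2) = 0" by simp
    then show False using is1 is2 d12 K0 by auto
  qed
  moreover have "i0 \<noteq> i2"
  proof
    assume "i0 = i2"
    then have "det2 (W$i0) (W$i2) = 0" by simp
    then show False using is0 is2 d02 K0 by auto
  qed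
  ultimately have all: "i = i0 \<or> i = i1 \<or> i = i2" for i
    using exhaust_3[of i] exhaust_3[of i0] exhaust_3[of i1] exhaust_3[of i2] by metis
  have mW: "\<bar>det2 (W$i) (W$j)\<bar> = K" if "i \<noteq> j" for i j
    using all[of i] all[of j] that is0 is1 is2 d01 d02 d12 sw K0 by (auto simp: abs_mult)
  have nW: "(W$i$1)^2 + (W$i$2)^2 = r^2" for i
    using all[of i] is0 is1 is2 nQ by (auto simp: power_mult_distrib algebra_simps)
  have "3 * r^2 = 2"
    using frame_eqs[OF WO] nW[of 1] nW[of 2] nW[of 3] by simp
  then have Kv: "K = sqrt 3 / 3" unfolding K_def by simp
  have s3: "sqrt 3 \<ge> 0.9" by (rule real_le_rsqrt) (simp add: power2_eq_square)
  have "F_vol W = K + K + K"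
    unfolding F_vol_3
    by (subst hex_measure_sym) (use mW[of 1 2] mW[of 1 3] mW[of 2 3] K0 in simp_all)
  then have FW: "F_vol W = sqrt 3" using Kv by simp
  show ?thesis
  proof (intro exI[of _ "1/40"] conjI ballI impI, simp)
    fix S :: "real^2^3"
    assume SO: "S \<in> Omega" and d: "dist S W < 1/40"
    have cl: "\<bar>S$i$k - W$i$k\<bar> \<le> 1/40" for i k
    proof -
      have "\<bar>(S - W)$i$k\<bar> \<le> norm ((S - W)$i)" by (rule component_le_norm_cart)
      also have "\<dots> \<le> norm (S - W)" by (rule Finite_Cartesian_Product.norm_nth_le)
      finally show ?thesis using d by (simp add: dist_norm)
    qed
    have dc: "\<bar>det2 (S$i) (S$j) - det2 (W$i) (W$j)\<bar> \<le> 4 * (1/40)" for i j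
      by (rule det2_close) (use entry_le1[OF SO] entry_le1[OF WO] cl in auto)
    have mS: "\<bar>\<bar>det2 (S$i) (S$j)\<bar> - K\<bar> \<le> 1/10" if "i \<noteq> j" for i j
      using dc[of i j] mW[OF that] abs_triangle_ineq3[of "det2 (S$i) (S$j)" "det2 (W$i) (W$j)"] by simp
    have m12: "\<bar>\<bar>det2 (S$1) (S$2)\<bar> - K\<bar> \<le> 1/10" by (rule mS) simp
    have m13: "\<bar>\<bar>det2 (S$1) (S$3)\<bar> - K\<bar> \<le> 1/10" by (rule mS) simp
    have m23: "\<bar>\<bar>det2 (S$2) (S$3)\<bar> - K\<bar> \<le> 1/10" by (rule mS) simp
    have K3: "K \<ge> 3/10" using Kv s3 by simp
    have b: "K - 1/10 \<le> \<bar>det2 (S$1) (S$2)\<bar>" "\<bar>det2 (S$1) (S$2)\<bar> \<le> K + 1/10"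
      "K - 1/10 \<le> \<bar>det2 (S$1) (S$3)\<bar>" "\<bar>det2 (S$1) (S$3)\<bar> \<le> K + 1/10"
      "K - 1/10 \<le> \<bar>det2 (S$2) (S$3)\<bar>" "\<bar>det2 (S$2) (S$3)\<bar> \<le> K + 1/10"
      using m12 m13 m23 unfolding abs_le_iff by linarith+
    have "F_vol S = \<bar>det2 (S$1) (S$2)\<bar> + \<bar>det2 (S$1) (S$3)\<bar> + \<bar>det2 (S$2) (S$3)\<bar>"
      unfolding F_vol_3
      by (rule hex_measure_sym) (use b K3 in linarith)+
    also have "\<dots> \<le> sqrt 3" by (rule sum_le_sqrt3[OF lagrange[OF SO]])
    finally show "F_vol S \<le> F_vol W" using FW by simp
  qed
qed

end
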